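(* Let $G$ be a compact Lie group. Every braidable infinite sequence $\xi=(\xi_i)_{i\geq1}$ of $G$-valued random variables is spreadable.
   Context: The braid group $\mathcal{B}_n$ ($n\ge2$) has generators $\beta_1,\dots,\beta_{n-1}$ and relations $\beta_i\beta_j\beta_i=\beta_j\beta_i\beta_j$ if $|i-j|=1$, $\beta_i\beta_j=\beta_j\beta_i$ if $|i-j|>1$; it acts on $n$-tuples of $G$-valued random variables via $\beta_i\bullet(X_1,\dots,X_i,X_{i+1},\dots,X_n)=(X_1,\dots,X_{i-1},X_iX_{i+1}X_i^{-1},X_i,X_{i+2},\dots,X_n)$. The sequence $\xi$ is braidable if for every $n\ge2$ and every $\beta\in\mathcal{B}_n$, $\beta\bullet(\xi_1,\dots,\xi_n)$ has the same law as $(\xi_1,\dots,\xi_n)$. It is spreadable if for every strictly increasing sequence of positive integers $(k_i)_{i\ge1}$, $(\xi_{k_i})_{i\ge1}$ has the same law as $(\xi_i)_{i\ge1}$. *)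

theory Defs
  imports "HOL-Analysis.Analysis" "HOL-Probability.Probability"
begin

text \<open>Compact Lie groups, realised as compact subgroups of GL_n(R)
  (every compact Lie group is isomorphic, as a topological group, to such a group).\<close>
definition compact_matrix_group :: "(real^'n^'n) set \<Rightarrow> bool" where
  "compact_matrix_group G \<longleftrightarrow> compact G \<and> mat 1 \<in> G \<and>
     (\<forall>A\<in>G. \<forall>B\<in>G. A ** B \<in> G) \<and> (\<forall>A\<in>G. invertible A \<and> matrix_inv A \<in> G)"

text \<open>Action of a braid generator (0-based: generator j acts on positions j, j+1;
  flag True means the inverse generator).\<close>
definition braid_gen :: "nat \<Rightarrow> bool \<Rightarrow> (nat \<Rightarrow> real^'n^'n) \<Rightarrow> (nat \<Rightarrow> real^'n^'n)" where
  "braid_gen j is_inv x =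
     (if is_inv then x(j := x (Suc j), Suc j := matrix_inv (x (Suc j)) ** x j ** x (Suc j))
      else x(j := x j ** x (Suc j) ** matrix_inv (x j), Suc j := x j))"

definition braid_act :: "(nat \<times> bool) list \<Rightarrow> (nat \<Rightarrow> real^'n^'n) \<Rightarrow> (nat \<Rightarrow> real^'n^'n)" where
  "braid_act ws x = foldr (\<lambda>(j, b) y. braid_gen j b y) ws x"

definition braidable :: "'a measure \<Rightarrow> (nat \<Rightarrow> 'a \<Rightarrow> real^'n^'n) \<Rightarrow> bool" where
  "braidable M \<xi> \<longleftrightarrow>
     (\<forall>n\<ge>2. \<forall>ws. (\<forall>(j, b)\<in>set ws. Suc j < n) \<longrightarrow>
        distr M (PiM {..<n} (\<lambda>_. borel)) (\<lambda>\<omega>. restrict (braid_act ws (\<lambda>i. \<xi> i \<omega>)) {..<n})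
        = distr M (PiM {..<n} (\<lambda>_. borel)) (\<lambda>\<omega>. restrict (\<lambda>i. \<xi> i \<omega>) {..<n}))"

definition spreadable :: "'a measure \<Rightarrow> (nat \<Rightarrow> 'a \<Rightarrow> 'b::topological_space) \<Rightarrow> bool" where
  "spreadable M \<xi> \<longleftrightarrow>
     (\<forall>k::nat \<Rightarrow> nat. strict_mono k \<longrightarrow>
        distr M (PiM UNIV (\<lambda>_. borel)) (\<lambda>\<omega> i. \<xi> (k i) \<omega>)
        = distr M (PiM UNIV (\<lambda>_. borel)) (\<lambda>\<omega> i. \<xi> i \<omega>))"

end

theory Submission
  imports Defs
begin

definition delw :: "nat \<Rightarrow> nat \<Rightarrow> (nat \<times> bool) list" where
  "delw i m = map (\<lambda>j. (j, True)) (rev [i..<m])"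

lemma braid_act_Cons: "braid_act ((j, b) # ws) x = braid_gen j b (braid_act ws x)"
  by (simp add: braid_act_def)

lemma braid_delw:
  assumes "i \<le> m"
  shows "(\<forall>l<m. braid_act (delw i m) x l = (if l < i then x l else x (Suc l))) \<and>
         (\<forall>l>m. braid_act (delw i m) x l = x l)"
  using assms
proof (induction m)
  case 0
  then show ?case by (simp add: delw_def braid_act_def)
next
  case (Suc m)
  show ?case
  proof (cases "i = Suc m")
    case True
    then show ?thesis by (simp add: delw_def braid_act_def)
  next
    case False
    then have im: "i \<le> m" using Suc.prems by simp
    have d: "delw i (Suc m) = (m, True) # delw i m"
      using im by (simp add: delw_def)
    from Suc.IH[OF im] im show ?thesis
      unfolding d braid_act_Cons braid_gen_def
      by (auto simp: less_Suc_eq)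
  qed
qed

definition flaw :: "'a measure \<Rightarrow> (nat \<Rightarrow> 'a \<Rightarrow> 'b::topological_space) \<Rightarrow> (nat \<Rightarrow> nat) \<Rightarrow> nat \<Rightarrow> (nat \<Rightarrow> 'b) measure" where
  "flaw M \<xi> f N = distr M (PiM {..<N} (\<lambda>_. borel)) (\<lambda>\<omega>. restrict (\<lambda>l. \<xi> (f l) \<omega>) {..<N})"

lemma flaw_meas:
  assumes "\<And>i. \<xi> i \<in> borel_measurable M"
  shows "(\<lambda>\<omega>. restrict (\<lambda>l. \<xi> (f l) \<omega>) {..<N}) \<in> measurable M (PiM {..<N} (\<lambda>_. borel))"
  by (rule measurable_restrict) (simp add: assms)

lemma flaw_comp:
  fixes \<xi> :: "nat \<Rightarrow> 'a \<Rightarrow> 'b::topological_space"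
  assumes "flaw M \<xi> f N = flaw M \<xi> g N" "\<And>l. l < m \<Longrightarrow> h l < N" "\<And>i. \<xi> i \<in> borel_measurable M"
  shows "flaw M \<xi> (f \<circ> h) m = flaw M \<xi> (g \<circ> h) m"
proof -
  define T where "T = (\<lambda>y::nat \<Rightarrow> 'b. restrict (\<lambda>l. y (h l)) {..<m})"
  have T: "T \<in> measurable (PiM {..<N} (\<lambda>_. borel)) (PiM {..<m} (\<lambda>_. (borel :: 'b measure)))"
    unfolding T_def by (rule measurable_restrict) (simp add: assms(2))
  have e: "\<And>f. flaw M \<xi> (f \<circ> h) m = distr (flaw M \<xi> f N) (PiM {..<m} (\<lambda>_. borel)) T"
  proof -
    fix f
    show "flaw M \<xi> (f \<circ> h) m = distr (flaw M \<xi> f N) (PiM {..<m} (\<lambda>_. borel)) T"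
      unfolding flaw_def
      apply (subst distr_distr[OF T flaw_meas[OF assms(3)]])
      apply (rule distr_cong)
      apply (auto simp: T_def assms(2) fun_eq_iff)
      done
  qed
  show ?thesis using assms(1) by (simp add: e)
qed

lemma meas_nth:
  fixes f :: "'a \<Rightarrow> 'b::euclidean_space^'n"
  assumes "f \<in> borel_measurable M"
  shows "(\<lambda>x. f x $ i) \<in> borel_measurable M"
proof -
  have "(\<lambda>y::'b^'n. y $ i) \<in> borel_measurable borel"
    by (intro borel_measurable_continuous_onI continuous_on_component continuous_on_id)
  then show ?thesis using measurable_compose[OF assms] by blast
qed

lemma meas_vec:
  fixes f :: "'a \<Rightarrow> 'b::euclidean_space^'n"
  assumes "\<And>i. (\<lambda>x. f x $ i) \<in> borel_measurable M"
  shows "f \<in> borel_measurable M"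
  unfolding borel_measurable_euclidean_space[of f]
proof (intro ballI)
  fix b :: "'b^'n" assume "b \<in> Basis"
  then obtain i u where b: "b = axis i u" "u \<in> Basis" unfolding Basis_vec_def by blast
  have "(\<lambda>x. f x $ i \<bullet> u) \<in> borel_measurable M"
    by (rule borel_measurable_inner[OF assms[of i] borel_measurable_const])
  then show "(\<lambda>x. f x \<bullet> b) \<in> borel_measurable M" unfolding b(1) inner_axis .
qed

lemma meas_mat:
  fixes f :: "'a \<Rightarrow> real^'n^'m"
  assumes "\<And>i j. (\<lambda>x. f x $ i $ j) \<in> borel_measurable M"
  shows "f \<in> borel_measurable M"
  by (rule meas_vec, rule meas_vec, rule assms)

lemma meas_entry:
  fixes f :: "'a \<Rightarrow> real^'n^'m"
  assumes "f \<in> borel_measurable M"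
  shows "(\<lambda>x. f x $ i $ j) \<in> borel_measurable M"
  by (rule meas_nth[where f="\<lambda>x. f x $ i"], rule meas_nth, rule assms)


lemma meas_det:
  fixes f :: "'a \<Rightarrow> real^'n^'n"
  assumes "\<And>i j. (\<lambda>x. f x $ i $ j) \<in> borel_measurable M"
  shows "(\<lambda>x. det (f x)) \<in> borel_measurable M"
  unfolding det_def
  apply (rule borel_measurable_sum)
  apply (rule borel_measurable_times)
   apply (rule borel_measurable_const)
  apply (rule borel_measurable_prod)
  apply (rule assms)
  done

lemma meas_mult:
  fixes f g :: "'a \<Rightarrow> real^'n^'n"
  assumes "f \<in> borel_measurable M" "g \<in> borel_measurable M"
  shows "(\<lambda>x. f x ** g x) \<in> borel_measurable M"
  unfolding matrix_matrix_mult_def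
  apply (rule meas_mat)
  apply (subst vec_lambda_beta)+
  apply (rule borel_measurable_sum)
  apply (rule borel_measurable_times)
   apply (rule meas_entry, rule assms)+
  done

definition cinv :: "real^'n^'n \<Rightarrow> real^'n^'n" where
  "cinv A = (\<chi> k j. det (\<chi> r c. if c = k then axis j 1 $ r else A$r$c) / det A)"

lemma meas_if_const:
  "f \<in> measurable M N \<Longrightarrow> g \<in> measurable M N \<Longrightarrow> (\<lambda>x. if P then f x else g x) \<in> measurable M N"
  by (cases P) auto

lemma meas_cinv:
  fixes f :: "'a \<Rightarrow> real^'n^'n"
  assumes "f \<in> borel_measurable M"
  shows "(\<lambda>x. cinv (f x)) \<in> borel_measurable M"
  unfolding cinv_def
  apply (rule meas_mat)
  apply (subst vec_lambda_beta)+
  apply (rule borel_measurable_divide)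
   apply (rule meas_det)
   apply (subst vec_lambda_beta)+
   apply (rule meas_if_const)
    apply (rule borel_measurable_const)
   apply (rule meas_entry, rule assms)
  apply (rule meas_det, rule meas_entry, rule assms)
  done


lemma matrix_inv_cinv:
  fixes A :: "real^'n^'n"
  assumes "det A \<noteq> 0"
  shows "matrix_inv A = cinv A"
proof -
  have "invertible A" using assms invertible_det_nz by blast
  then have r: "A ** matrix_inv A = mat 1"
    unfolding invertible_def matrix_inv_def by (metis (mono_tags, lifting) someI_ex)
  show ?thesis
  proof (subst vec_eq_iff, intro allI, subst vec_eq_iff, intro allI)
    fix k j
    have "A *v (matrix_inv A *v axis j 1) = axis j 1"
      by (simp add: matrix_vector_mul_assoc r)
    then have "matrix_inv A *v axis j 1 = (\<chi> k. det(\<chi> i c. if c=k then axis j 1 $i else A$i$c) / det A)"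
      using cramer[OF assms] by blast
    then have "(matrix_inv A *v axis j 1) $ k = det(\<chi> i c. if c=k then axis j 1 $i else A$i$c) / det A"
      by simp
    then show "matrix_inv A $ k $ j = cinv A $ k $ j"
      by (simp add: cinv_def matrix_vector_mult_basis column_def)
  qed
qed

lemma matrix_inv_sing:
  fixes A :: "real^'n^'n"
  assumes "det A = 0"
  shows "matrix_inv A = matrix_inv (0::real^'n^'n)"
proof -
  have "\<not> invertible A" using assms invertible_det_nz by blast
  moreover have "\<not> invertible (0::real^'n^'n)"
  proof
    assume "invertible (0::real^'n^'n)"
    then obtain A' :: "real^'n^'n" where "0 ** A' = mat 1" unfolding invertible_def by blast
    then have "(0 ** A') $ undefined $ undefined = (mat 1 :: real^'n^'n) $ undefined $ undefined" by simp
    then show False by (simp add: matrix_matrix_mult_def mat_def)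
  qed
  ultimately have "(\<lambda>A'::real^'n^'n. A ** A' = mat 1 \<and> A' ** A = mat 1) = (\<lambda>A'. (0::real^'n^'n) ** A' = mat 1 \<and> A' ** 0 = mat 1)"
    unfolding invertible_def by blast
  then show ?thesis unfolding matrix_inv_def by simp
qed

lemma meas_matrix_inv:
  fixes f :: "'a \<Rightarrow> real^'n^'n"
  assumes "f \<in> borel_measurable M"
  shows "(\<lambda>x. matrix_inv (f x)) \<in> borel_measurable M"
proof -
  have e: "(\<lambda>x. matrix_inv (f x)) = (\<lambda>x. if det (f x) = 0 then matrix_inv (0::real^'n^'n) else cinv (f x))"
    using matrix_inv_cinv matrix_inv_sing by (auto simp: fun_eq_iff)
  have d: "(\<lambda>x. det (f x)) \<in> borel_measurable M" by (rule meas_det, rule meas_entry, rule assms)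
  have s: "{x \<in> space M. det (f x) = 0} \<in> sets M" using d by measurable
  show ?thesis unfolding e
    by (rule measurable_If[OF borel_measurable_const meas_cinv[OF assms] s])
qed

lemma meas_braid:
  fixes x :: "'a \<Rightarrow> nat \<Rightarrow> real^'n^'n"
  assumes "\<And>i. (\<lambda>\<omega>. x \<omega> i) \<in> borel_measurable M"
  shows "(\<lambda>\<omega>. braid_act ws (x \<omega>) l) \<in> borel_measurable M"
proof (induction ws arbitrary: l)
  case Nil
  then show ?case by (simp add: braid_act_def assms)
next
  case (Cons w ws)
  obtain j b where w: "w = (j, b)" by (cases w)
  show ?case
    unfolding w braid_act_Cons braid_gen_def
    by (cases b; cases "l = Suc j"; cases "l = j")
       (simp_all add: Cons.IH meas_mult meas_matrix_inv)
qed

lemma distr_push: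
  assumes "distr M P X = distr M P Y" "X \<in> measurable M P" "Y \<in> measurable M P" "T \<in> measurable P Q"
  shows "distr M Q (\<lambda>\<omega>. T (X \<omega>)) = distr M Q (\<lambda>\<omega>. T (Y \<omega>))"
  using distr_distr[OF assms(4) assms(2)] distr_distr[OF assms(4) assms(3)] assms(1)
  by (simp add: comp_def)

lemma del_law:
  fixes \<xi> :: "nat \<Rightarrow> 'a \<Rightarrow> real^'n^'n"
  assumes br: "braidable M \<xi>" and meas: "\<And>i. \<xi> i \<in> borel_measurable M"
  shows "flaw M \<xi> (\<lambda>l. if l < i then l else Suc l) N = flaw M \<xi> id N"
proof (cases "N \<le> i")
  case True
  then show ?thesis unfolding flaw_def
    by (intro distr_cong) (auto simp: restrict_def fun_eq_iff)
next
  case False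
  then have iN: "i < N" by simp
  let ?P = "PiM {..<Suc N} (\<lambda>_. borel :: (real^'n^'n) measure)"
  let ?Q = "PiM {..<N} (\<lambda>_. borel :: (real^'n^'n) measure)"
  have ws: "\<forall>(j, b)\<in>set (delw i N). Suc j < Suc N" by (auto simp: delw_def)
  have eq: "distr M ?P (\<lambda>\<omega>. restrict (braid_act (delw i N) (\<lambda>i. \<xi> i \<omega>)) {..<Suc N})
        = distr M ?P (\<lambda>\<omega>. restrict (\<lambda>i. \<xi> i \<omega>) {..<Suc N})"
    using br ws iN unfolding braidable_def by auto
  have mX: "(\<lambda>\<omega>. restrict (braid_act (delw i N) (\<lambda>i. \<xi> i \<omega>)) {..<Suc N}) \<in> measurable M ?P"
    by (rule measurable_restrict, rule meas_braid[where x="\<lambda>\<omega> i. \<xi> i \<omega>"], rule meas)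
  have mY: "(\<lambda>\<omega>. restrict (\<lambda>i. \<xi> i \<omega>) {..<Suc N}) \<in> measurable M ?P"
    by (rule measurable_restrict, rule meas)
  have mT: "(\<lambda>y. restrict y {..<N}) \<in> measurable ?P ?Q"
    by (rule measurable_restrict) (rule measurable_component_singleton, simp)
  from distr_push[OF eq mX mY mT]
  have "distr M ?Q (\<lambda>\<omega>. restrict (restrict (braid_act (delw i N) (\<lambda>i. \<xi> i \<omega>)) {..<Suc N}) {..<N})
      = distr M ?Q (\<lambda>\<omega>. restrict (restrict (\<lambda>i. \<xi> i \<omega>) {..<Suc N}) {..<N})" .
  moreover have "\<And>\<omega>. restrict (restrict (braid_act (delw i N) (\<lambda>i. \<xi> i \<omega>)) {..<Suc N}) {..<N}
      = restrict (\<lambda>l. \<xi> (if l < i then l else Suc l) \<omega>) {..<N}"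
  proof -
    have bd: "braid_act (delw i N) x l = (if l < i then x l else x (Suc l))" if "l < N" for x l
      using braid_delw[of i N x] iN that by simp
    fix \<omega> show "restrict (restrict (braid_act (delw i N) (\<lambda>i. \<xi> i \<omega>)) {..<Suc N}) {..<N}
      = restrict (\<lambda>l. \<xi> (if l < i then l else Suc l) \<omega>) {..<N}"
      by (auto simp: restrict_def fun_eq_iff bd)
  qed
  moreover have "\<And>\<omega>. restrict (restrict (\<lambda>i. \<xi> i \<omega>) {..<Suc N}) {..<N} = restrict (\<lambda>l. \<xi> (id l) \<omega>) {..<N}"
    by (auto simp: restrict_def fun_eq_iff)
  ultimately show ?thesis unfolding flaw_def by simp
qed

lemma fin_spread:
  fixes \<xi> :: "nat \<Rightarrow> 'a \<Rightarrow> real^'n^'n"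
  assumes br: "braidable M \<xi>" and meas: "\<And>i. \<xi> i \<in> borel_measurable M"
  shows "strict_mono k \<Longrightarrow> flaw M \<xi> k m = flaw M \<xi> id m"
proof (induction "k (m - 1)" arbitrary: k rule: less_induct)
  case less
  note sm = less.prems
  show ?case
  proof (cases "\<forall>l<m. k l = l")
    case True
    then show ?thesis unfolding flaw_def
      by (intro distr_cong) (auto simp: restrict_def fun_eq_iff)
  next
    case False
    define i where "i = (LEAST i. i < m \<and> k i \<noteq> i)"
    have i: "i < m" "k i \<noteq> i" using False LeastI_ex[of "\<lambda>i. i < m \<and> k i \<noteq> i"] i_def by auto
    have below: "k l = l" if "l < i" for l
      using not_less_Least[of l "\<lambda>i. i < m \<and> k i \<noteq> i"] that i(1) i_def by auto
    have ge: "\<And>l. l \<le> k l" using seq_suble[OF sm] by simp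
    have ki: "i < k i" using ge[of i] i(2) by simp
    have mono: "\<And>a b. a \<le> b \<Longrightarrow> k a \<le> k b" using sm strict_mono_less_eq by blast
    define k' where "k' l = (if l < i then l else k l - 1)" for l
    define d where "d l = (if l < i then l else Suc l)" for l
    have sm': "strict_mono k'"
    proof (rule strict_monoI)
      fix a b :: nat assume ab: "a < b"
      show "k' a < k' b"
      proof (cases "b < i")
        case True then show ?thesis using ab by (simp add: k'_def)
      next
        case False
        then have "k i \<le> k b" using mono by simp
        moreover have "k a < k b" using sm ab strict_monoD by blast
        moreover have "i \<le> a \<Longrightarrow> k i \<le> k a" using mono by simp
        ultimately show ?thesis using ab False ki by (auto simp: k'_def)
      qed
    qed
    have dk: "d \<circ> k' = k"
    proof
      fix l
      show "(d \<circ> k') l = k l"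
      proof (cases "l < i")
        case True then show ?thesis by (simp add: d_def k'_def below)
      next
        case False
        then have "k i \<le> k l" using mono by simp
        then show ?thesis using False ki by (auto simp: d_def k'_def)
      qed
    qed
    define N where "N = Suc (k (m - 1))"
    have hN: "k' l < N" if "l < m" for l
    proof -
      have "k l \<le> k (m - 1)" using mono that by simp
      then show ?thesis using below[of l] by (auto simp: k'_def N_def)
    qed
    have "flaw M \<xi> k m = flaw M \<xi> (d \<circ> k') m" by (simp add: dk)
    also have "\<dots> = flaw M \<xi> (id \<circ> k') m"
      by (rule flaw_comp[OF _ hN meas]) (unfold d_def, rule del_law[OF br meas])
    also have "\<dots> = flaw M \<xi> id m"
    proof -
      have "k' (m - 1) < k (m - 1)"
      proof -
        have "i \<le> m - 1" using i by simp
        then have "k i \<le> k (m - 1)" using mono by simp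
        then show ?thesis using ki \<open>i \<le> m - 1\<close> by (simp add: k'_def)
      qed
      then show ?thesis using less.hyps[OF _ sm'] by simp
    qed
    finally show ?thesis .
  qed
qed

lemma emb_flaw:
  fixes \<xi> :: "nat \<Rightarrow> 'a \<Rightarrow> real^'n^'n"
  assumes meas: "\<And>i. \<xi> i \<in> borel_measurable M"
    and J: "J \<subseteq> {..<m}" and A: "\<And>j. j \<in> J \<Longrightarrow> A j \<in> sets borel"
  shows "emeasure (flaw M \<xi> f m) (prod_emb {..<m} (\<lambda>_. borel) J (PiE J A))
       = emeasure M {\<omega> \<in> space M. \<forall>j\<in>J. \<xi> (f j) \<omega> \<in> A j}"
proof -
  have fin: "finite J" using J finite_subset by blast
  have s: "prod_emb {..<m} (\<lambda>_. borel) J (PiE J A) \<in> sets (PiM {..<m} (\<lambda>_. borel :: (real^'n^'n) measure))"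
    by (rule sets_PiM_I[OF fin J]) (simp add: A)
  have e: "(restrict (\<lambda>l. \<xi> (f l) \<omega>) {..<m} \<in> prod_emb {..<m} (\<lambda>_. borel) J (PiE J A)) \<longleftrightarrow> (\<forall>j\<in>J. \<xi> (f j) \<omega> \<in> A j)" for \<omega>
    unfolding prod_emb_iff space_borel using J by (auto simp: PiE_iff)
  show ?thesis unfolding flaw_def
    apply (subst emeasure_distr[OF flaw_meas[OF meas] s])
    apply (rule arg_cong[where f="emeasure M"])
    using e by blast
qed
lemma emb_inf:
  fixes \<xi> :: "nat \<Rightarrow> 'a \<Rightarrow> real^'n^'n"
  assumes meas: "\<And>i. \<xi> i \<in> borel_measurable M"
    and fin: "finite J" and A: "\<And>j. j \<in> J \<Longrightarrow> A j \<in> sets borel"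
  shows "emeasure (distr M (PiM UNIV (\<lambda>_. borel)) (\<lambda>\<omega> i. \<xi> (f i) \<omega>)) (prod_emb UNIV (\<lambda>_. borel) J (PiE J A))
       = emeasure M {\<omega> \<in> space M. \<forall>j\<in>J. \<xi> (f j) \<omega> \<in> A j}"
proof -
  have s: "prod_emb UNIV (\<lambda>_. borel) J (PiE J A) \<in> sets (PiM UNIV (\<lambda>_. borel :: (real^'n^'n) measure))"
    by (rule sets_PiM_I[OF fin subset_UNIV]) (simp add: A)
  have m: "(\<lambda>\<omega> i. \<xi> (f i) \<omega>) \<in> measurable M (PiM UNIV (\<lambda>_. borel :: (real^'n^'n) measure))"
    by (rule measurable_PiM_single'; simp add: meas)
  have e: "((\<lambda>i. \<xi> (f i) \<omega>) \<in> prod_emb UNIV (\<lambda>_. borel) J (PiE J A)) \<longleftrightarrow> (\<forall>j\<in>J. \<xi> (f j) \<omega> \<in> A j)" for \<omega>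
    unfolding prod_emb_iff space_borel by (auto simp: PiE_iff)
  show ?thesis
    apply (subst emeasure_distr[OF m s])
    apply (rule arg_cong[where f="emeasure M"])
    using e by blast
qed

theorem lemma8p2:
  fixes G :: "(real^'n^'n) set" and M :: "'a measure" and \<xi> :: "nat \<Rightarrow> 'a \<Rightarrow> real^'n^'n"
  assumes "compact_matrix_group G"
    and "prob_space M"
    and "\<And>i. \<xi> i \<in> borel_measurable M"
    and "\<And>i \<omega>. \<omega> \<in> space M \<Longrightarrow> \<xi> i \<omega> \<in> G"
    and "braidable M \<xi>"
  shows "spreadable M \<xi>"
  unfolding spreadable_def
proof (intro allI impI)
  fix k :: "nat \<Rightarrow> nat" assume sm: "strict_mono k"
  have meas: "\<And>i. \<xi> i \<in> borel_measurable M" by fact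
  have m: "\<And>f. (\<lambda>\<omega> i. \<xi> (f i) \<omega>) \<in> measurable M (PiM UNIV (\<lambda>_. borel :: (real^'n^'n) measure))"
    by (rule measurable_PiM_single'; simp add: meas)
  interpret prob_space M by fact
  show "distr M (PiM UNIV (\<lambda>_. borel)) (\<lambda>\<omega> i. \<xi> (k i) \<omega>)
        = distr M (PiM UNIV (\<lambda>_. borel)) (\<lambda>\<omega> i. \<xi> i \<omega>)"
  proof (rule measure_eqI_PiM_infinite)
    show "sets (distr M (PiM UNIV (\<lambda>_. borel)) (\<lambda>\<omega> i. \<xi> (k i) \<omega>)) = sets (PiM UNIV (\<lambda>_. borel :: (real^'n^'n) measure))"
      by simp
    show "sets (distr M (PiM UNIV (\<lambda>_. borel)) (\<lambda>\<omega> i. \<xi> i \<omega>)) = sets (PiM UNIV (\<lambda>_. borel :: (real^'n^'n) measure))"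
      by simp
    show "finite_measure (distr M (PiM UNIV (\<lambda>_. borel)) (\<lambda>\<omega> i. \<xi> (k i) \<omega>))"
      using prob_space_distr[OF m[of k]] unfolding prob_space_def by blast
  next
    fix A and J :: "nat set" assume fin: "finite J" and "J \<subseteq> UNIV" and A: "\<And>i. i \<in> J \<Longrightarrow> A i \<in> sets (borel :: (real^'n^'n) measure)"
    obtain m where Jm: "J \<subseteq> {..<m}" using fin finite_nat_iff_bounded by blast
    note X = emb_inf[OF meas fin A, where f=k]
    have "emeasure (distr M (PiM UNIV (\<lambda>_. borel)) (\<lambda>\<omega> i. \<xi> (k i) \<omega>)) (prod_emb UNIV (\<lambda>_. borel) J (PiE J A))
        = emeasure M {\<omega> \<in> space M. \<forall>j\<in>J. \<xi> (k j) \<omega> \<in> A j}" by (rule X)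
    have "emeasure (distr M (PiM UNIV (\<lambda>_. borel)) (\<lambda>\<omega> i. \<xi> (k i) \<omega>)) (prod_emb UNIV (\<lambda>_. borel) J (PiE J A))
        = emeasure (flaw M \<xi> k m) (prod_emb {..<m} (\<lambda>_. borel) J (PiE J A))"
      by (rule trans[OF X emb_flaw[OF meas Jm A, where f=k, symmetric]])
    also have "\<dots> = emeasure (flaw M \<xi> id m) (prod_emb {..<m} (\<lambda>_. borel) J (PiE J A))"
      by (simp only: fin_spread[OF assms(5) meas sm])
    also have "\<dots> = emeasure (distr M (PiM UNIV (\<lambda>_. borel)) (\<lambda>\<omega> i. \<xi> i \<omega>)) (prod_emb UNIV (\<lambda>_. borel) J (PiE J A))"
      using trans[OF emb_flaw[OF meas Jm A, where f=id] emb_inf[OF meas fin A, where f="\<lambda>i. i", symmetric]] by (simp only: id_apply)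
    finally show "emeasure (distr M (PiM UNIV (\<lambda>_. borel)) (\<lambda>\<omega> i. \<xi> (k i) \<omega>)) (prod_emb UNIV (\<lambda>_. borel) J (PiE J A))
        = emeasure (distr M (PiM UNIV (\<lambda>_. borel)) (\<lambda>\<omega> i. \<xi> i \<omega>)) (prod_emb UNIV (\<lambda>_. borel) J (PiE J A))" .
  qed
qed

end
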